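(* Let $(B',\boldsymbol y',\boldsymbol z',\boldsymbol q',\boldsymbol a')$ be the mutation of a groupoid seed $(B,\boldsymbol y,\boldsymbol z,\boldsymbol q,\boldsymbol a)$ in direction $k$ with sign $\varepsilon\in\{\pm1\}$. Write $\beta$ for the action of $(B,\boldsymbol y,\boldsymbol z,\boldsymbol q,\boldsymbol a)$ and $\beta'$ for the action of $(B',\boldsymbol y',\boldsymbol z',\boldsymbol q',\boldsymbol a')$. Then for every $1\le i\le n$, $\beta'(y'_i)=\beta(y'_i)$, where $\beta(y'_i)$ means the expression for $y'_i$ in terms of $\boldsymbol y$ with each $y_j$ replaced by $\beta(y_j)$. Equivalently, the seed $(B',\beta'\boldsymbol y',\boldsymbol z')$ is the mutation in direction $k$ of the seed $(B,\beta\boldsymbol y,\boldsymbol z)$.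
   Context: Fix positive integers $n$ and $d_1,\dots,d_n$. A seed over $\mathbb R_{>0}$ is a triple $(B,\boldsymbol y,\boldsymbol z)$: $B=(b_{ij})$ an $n\times n$ integer matrix with a fixed diagonal $R=\mathrm{diag}(r_1,\dots,r_n)$, $r_i\in\mathbb Z_{>0}$, such that $RB$ is skew-symmetric; $\boldsymbol y\in\mathbb R_{>0}^n$; $\boldsymbol z=(z_{i,s})_{1\le i\le n,1\le s\le d_i-1}$ with $z_{i,s}\in\mathbb R_{\ge0}$. Put $P_k(\alpha)=1+\sum_{s=1}^{d_k-1}z_{k,s}\alpha^s+\alpha^{d_k}$, and for $\varepsilon\in\{\pm1\}$, $P^\circ_k(\alpha)=P_k(\alpha^\varepsilon)\alpha^{\frac{1-\varepsilon}{2}d_k}$; $[a]_+=\max(a,0)$. Seed mutation in direction $k$ with sign $\varepsilon$: $b'_{ij}=-b_{ij}$ if $i=k$ or $j=k$, else $b'_{ij}=b_{ij}+[-\varepsilon b_{ik}d_k]_+b_{kj}+b_{ik}[\varepsilon d_kb_{kj}]_+$; $y'_k=y_k^{-1}$, $y'_i=y_iy_k^{[\varepsilon d_kb_{ki}]_+}P^\circ_k(y_k^\varepsilon)^{-b_{ki}}$ ($i\ne k$); $z'_{k,s}=z_{k,d_k-s}$, $z'_{i,s}=z_{i,s}$ ($i\ne k$). A groupoid seed is a quintuple $(B,\boldsymbol y,\boldsymbol z,\boldsymbol q,\boldsymbol a)$ with $(B,\boldsymbol y,\boldsymbol z)$ a seed over $\mathbb R_{>0}$, $\boldsymbol q=(q_1,\dots,q_n)\in\mathbb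 R^n$ and $\boldsymbol a=(a_{i,s})_{1\le i\le n,1\le s\le d_i-1}$ real. Its action is $\beta(y_j)=y_j\exp\big(\sum_{i=1}^n r_ib_{ij}y_iq_i\big)$, extended multiplicatively/compositionally to expressions in $\boldsymbol y$ (e.g. $\beta(y_k^\varepsilon)=\beta(y_k)^\varepsilon$); $\beta(B,\boldsymbol y,\boldsymbol z,\boldsymbol q,\boldsymbol a)=(B,\beta\boldsymbol y,\boldsymbol z)$. The mutation in direction $k$ with sign $\varepsilon$ is $(B',\boldsymbol y',\boldsymbol z',\boldsymbol q',\boldsymbol a')$ where $(B',\boldsymbol y',\boldsymbol z')$ is the seed mutation and $q'_k=-q_ky_k^2+\sum_{i'=1}^n[\varepsilon d_kb_{ki'}]_+q_{i'}y_{i'}y_k+\frac{y_k}{r_k}\log\frac{P^\circ_k(\beta(y_k)^\varepsilon)}{P^\circ_k(y_k^\varepsilon)}$, $q'_i=q_iy_k^{-[\varepsilon d_kb_{ki}]_+}P^\circ_k(y_k^\varepsilon)^{b_{ki}}$ ($i\ne k$), $a'_{k,s}=a_{k,d_k-s}+\frac{\varepsilon}{r_k}\int_{y_k^\varepsilon}^{\beta(y_k)^\varepsilon}\frac{u^{\varepsilon(d_k-s)-1}}{P_k(u^\varepsilon)}\,du$, $a'_{i,s}=a_{i,s}$ ($i\ne k$). *)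

theory Defs
  imports "HOL-Analysis.Analysis"
begin

text \<open>Indices are 0-based: directions i < n (the paper's 1..n).
  B :: nat => nat => int, y, q :: nat => real, z, a :: nat => nat => real,
  d, r :: nat => nat. The sign eps is an integer in {1, -1}.\<close>

definition pos_part :: "int \<Rightarrow> int" where
  "pos_part x = max x 0"

definition is_seed ::
  "nat \<Rightarrow> (nat \<Rightarrow> nat) \<Rightarrow> (nat \<Rightarrow> nat) \<Rightarrow> (nat \<Rightarrow> nat \<Rightarrow> int)
   \<Rightarrow> (nat \<Rightarrow> real) \<Rightarrow> (nat \<Rightarrow> nat \<Rightarrow> real) \<Rightarrow> bool" where
  "is_seed n d r B y z \<longleftrightarrow>
     (\<forall>i<n. 0 < d i \<and> 0 < r i \<and> 0 < y i) \<and>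
     (\<forall>i<n. \<forall>j<n. int (r i) * B i j = - (int (r j) * B j i)) \<and>
     (\<forall>i<n. \<forall>s\<in>{1..d i - 1}. 0 \<le> z i s)"

definition P_poly :: "(nat \<Rightarrow> nat) \<Rightarrow> (nat \<Rightarrow> nat \<Rightarrow> real) \<Rightarrow> nat \<Rightarrow> real \<Rightarrow> real" where
  "P_poly d z k \<alpha> = 1 + (\<Sum>s=1..d k - 1. z k s * \<alpha> ^ s) + \<alpha> ^ d k"

definition P_circ :: "(nat \<Rightarrow> nat) \<Rightarrow> (nat \<Rightarrow> nat \<Rightarrow> real) \<Rightarrow> nat \<Rightarrow> int \<Rightarrow> real \<Rightarrow> real" where
  "P_circ d z k \<epsilon> \<alpha> =
     P_poly d z k (\<alpha> powr real_of_int \<epsilon>) * \<alpha> powr ((1 - real_of_int \<epsilon>) / 2 * real (d k))"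

definition mut_B :: "(nat \<Rightarrow> nat) \<Rightarrow> (nat \<Rightarrow> nat \<Rightarrow> int) \<Rightarrow> nat \<Rightarrow> int \<Rightarrow> nat \<Rightarrow> nat \<Rightarrow> int" where
  "mut_B d B k \<epsilon> i j =
     (if i = k \<or> j = k then - B i j
      else B i j + pos_part (- \<epsilon> * B i k * int (d k)) * B k j
                 + B i k * pos_part (\<epsilon> * int (d k) * B k j))"

definition mut_y :: "(nat \<Rightarrow> nat) \<Rightarrow> (nat \<Rightarrow> nat \<Rightarrow> int) \<Rightarrow> (nat \<Rightarrow> nat \<Rightarrow> real) \<Rightarrow> nat \<Rightarrow> int
    \<Rightarrow> (nat \<Rightarrow> real) \<Rightarrow> nat \<Rightarrow> real" where
  "mut_y d B z k \<epsilon> y i =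
     (if i = k then inverse (y k)
      else y i * y k powr real_of_int (pos_part (\<epsilon> * int (d k) * B k i))
               * P_circ d z k \<epsilon> (y k powr real_of_int \<epsilon>) powr real_of_int (- B k i))"

definition mut_z :: "(nat \<Rightarrow> nat) \<Rightarrow> (nat \<Rightarrow> nat \<Rightarrow> real) \<Rightarrow> nat \<Rightarrow> nat \<Rightarrow> nat \<Rightarrow> real" where
  "mut_z d z k i s = (if i = k then z k (d k - s) else z i s)"

definition gaction :: "nat \<Rightarrow> (nat \<Rightarrow> nat) \<Rightarrow> (nat \<Rightarrow> nat \<Rightarrow> int) \<Rightarrow> (nat \<Rightarrow> real) \<Rightarrow> (nat \<Rightarrow> real)
    \<Rightarrow> nat \<Rightarrow> real" where
  "gaction n r B y q j = y j * exp (\<Sum>i<n. real (r i) * real_of_int (B i j) * y i * q i)"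

definition mut_q :: "nat \<Rightarrow> (nat \<Rightarrow> nat) \<Rightarrow> (nat \<Rightarrow> nat) \<Rightarrow> (nat \<Rightarrow> nat \<Rightarrow> int) \<Rightarrow> (nat \<Rightarrow> real)
    \<Rightarrow> (nat \<Rightarrow> nat \<Rightarrow> real) \<Rightarrow> (nat \<Rightarrow> real) \<Rightarrow> nat \<Rightarrow> int \<Rightarrow> nat \<Rightarrow> real" where
  "mut_q n d r B y z q k \<epsilon> i =
     (if i = k then
        - q k * (y k)\<^sup>2
        + (\<Sum>i'<n. real_of_int (pos_part (\<epsilon> * int (d k) * B k i')) * q i' * y i' * y k)
        + y k / real (r k)
          * ln (P_circ d z k \<epsilon> (gaction n r B y q k powr real_of_int \<epsilon>)
                / P_circ d z k \<epsilon> (y k powr real_of_int \<epsilon>))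
      else q i * y k powr real_of_int (- pos_part (\<epsilon> * int (d k) * B k i))
               * P_circ d z k \<epsilon> (y k powr real_of_int \<epsilon>) powr real_of_int (B k i))"

definition oint :: "real \<Rightarrow> real \<Rightarrow> (real \<Rightarrow> real) \<Rightarrow> real" where
  "oint a b f = (if a \<le> b then integral {a..b} f else - integral {b..a} f)"

definition mut_a :: "nat \<Rightarrow> (nat \<Rightarrow> nat) \<Rightarrow> (nat \<Rightarrow> nat) \<Rightarrow> (nat \<Rightarrow> nat \<Rightarrow> int) \<Rightarrow> (nat \<Rightarrow> real)
    \<Rightarrow> (nat \<Rightarrow> nat \<Rightarrow> real) \<Rightarrow> (nat \<Rightarrow> real) \<Rightarrow> (nat \<Rightarrow> nat \<Rightarrow> real) \<Rightarrow> nat \<Rightarrow> int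
    \<Rightarrow> nat \<Rightarrow> nat \<Rightarrow> real" where
  "mut_a n d r B y z q a k \<epsilon> i s =
     (if i = k then
        a k (d k - s) + real_of_int \<epsilon> / real (r k)
          * oint (y k powr real_of_int \<epsilon>) (gaction n r B y q k powr real_of_int \<epsilon>)
              (\<lambda>u. u powr (real_of_int \<epsilon> * (real (d k) - real s) - 1)
                    / P_poly d z k (u powr real_of_int \<epsilon>))
      else a i s)"

definition gseed_mut ::
  "nat \<Rightarrow> (nat \<Rightarrow> nat) \<Rightarrow> (nat \<Rightarrow> nat) \<Rightarrow> nat \<Rightarrow> int
   \<Rightarrow> (nat \<Rightarrow> nat \<Rightarrow> int) \<times> (nat \<Rightarrow> real) \<times> (nat \<Rightarrow> nat \<Rightarrow> real) \<times> (nat \<Rightarrow> real) \<times> (nat \<Rightarrow> nat \<Rightarrow> real)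
   \<Rightarrow> (nat \<Rightarrow> nat \<Rightarrow> int) \<times> (nat \<Rightarrow> real) \<times> (nat \<Rightarrow> nat \<Rightarrow> real) \<times> (nat \<Rightarrow> real) \<times> (nat \<Rightarrow> nat \<Rightarrow> real)"
  where
  "gseed_mut n d r k \<epsilon> S = (case S of (B, y, z, q, a) \<Rightarrow>
     (mut_B d B k \<epsilon>, mut_y d B z k \<epsilon> y, mut_z d z k, mut_q n d r B y z q k \<epsilon>,
      mut_a n d r B y z q a k \<epsilon>))"

end

theory Submission
  imports Defs
begin

lemma pp_scale: "(c::int) \<ge> 0 \<Longrightarrow> c * pos_part x = pos_part (c * x)"
  unfolding pos_part_def by (simp add: max_def mult_le_0_iff)

lemma P_poly_pos:
  assumes "\<forall>s\<in>{1..d k - 1}. 0 \<le> z k s" "0 < \<alpha>"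
  shows "0 < P_poly d z k \<alpha>"
proof -
  have "0 \<le> (\<Sum>s=1..d k - 1. z k s * \<alpha> ^ s)"
    using assms by (intro sum_nonneg) auto
  moreover have "0 < \<alpha> ^ d k" using assms by simp
  ultimately show ?thesis unfolding P_poly_def by linarith
qed

lemma P_circ_pos:
  assumes "\<forall>s\<in>{1..d k - 1}. 0 \<le> z k s" "0 < \<alpha>"
  shows "0 < P_circ d z k e \<alpha>"
  unfolding P_circ_def using P_poly_pos[of d k z, OF assms(1)] assms(2) by simp

theorem mainTheorem2:
  fixes n k :: nat and d r :: "nat \<Rightarrow> nat" and \<epsilon> :: int
    and B :: "nat \<Rightarrow> nat \<Rightarrow> int" and y q :: "nat \<Rightarrow> real" and z a :: "nat \<Rightarrow> nat \<Rightarrow> real"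
    and B' :: "nat \<Rightarrow> nat \<Rightarrow> int" and y' q' :: "nat \<Rightarrow> real" and z' a' :: "nat \<Rightarrow> nat \<Rightarrow> real"
  assumes seed: "is_seed n d r B y z"
    and k: "k < n"
    and eps: "\<epsilon> = 1 \<or> \<epsilon> = -1"
    and mut: "gseed_mut n d r k \<epsilon> (B, y, z, q, a) = (B', y', z', q', a')"
  shows "\<forall>i<n. gaction n r B' y' q' i = mut_y d B z k \<epsilon> (gaction n r B y q) i"
proof (intro allI impI)
  fix j assume j: "j < n"
  have B'd: "B' = mut_B d B k \<epsilon>" and y'd: "y' = mut_y d B z k \<epsilon> y"
    and q'd: "q' = mut_q n d r B y z q k \<epsilon>"
    using mut unfolding gseed_mut_def by auto
  have ypos: "\<And>i. i < n \<Longrightarrow> 0 < y i" and rpos: "\<And>i. i < n \<Longrightarrow> 0 < r i"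
    using seed unfolding is_seed_def by auto
  have skew0: "\<forall>i<n. \<forall>j<n. int (r i) * B i j = - (int (r j) * B j i)"
    using seed unfolding is_seed_def by blast
  have skew: "\<And>i j. i < n \<Longrightarrow> j < n \<Longrightarrow> int (r i) * B i j = - (int (r j) * B j i)"
    using skew0 by blast
  have zk0: "\<forall>i<n. \<forall>s\<in>{1..d i - 1}. 0 \<le> z i s" using seed unfolding is_seed_def by blast
  have zk: "\<forall>s\<in>{1..d k - 1}. 0 \<le> z k s" using zk0 k by blast
  have "int (r k) * B k k = 0" using skew[OF k k] by linarith
  then have Bkk: "B k k = 0" using rpos[OF k] by simp
  define S where "S = (\<lambda>j. \<Sum>i<n. real (r i) * real_of_int (B i j) * y i * q i)"
  define Y where "Y = gaction n r B y q"
  have Yd: "\<And>j. Y j = y j * exp (S j)" unfolding Y_def S_def gaction_def by simp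
  define Lk where "Lk = P_circ d z k \<epsilon> (y k powr real_of_int \<epsilon>)"
  define Lb where "Lb = P_circ d z k \<epsilon> (Y k powr real_of_int \<epsilon>)"
  have yk: "0 < y k" using ypos k by simp
  have Yk: "0 < Y k" using yk by (simp add: Yd)
  have Lk: "0 < Lk" unfolding Lk_def using P_circ_pos[of d k z, OF zk] yk by simp
  have Lb: "0 < Lb" unfolding Lb_def using P_circ_pos[of d k z, OF zk] Yk by simp
  define c where "c = (\<lambda>i. pos_part (\<epsilon> * int (d k) * B k i))"
  define T where "T = (\<Sum>i'<n. real_of_int (c i') * q i' * y i' * y k)"
  have T0: "(\<Sum>i'<n. real_of_int (c i') * q i' * y i') = T / y k"
    unfolding T_def using yk by (simp add: sum_divide_distrib)
  have yq: "\<And>i. i < n \<Longrightarrow> i \<noteq> k \<Longrightarrow> y' i * q' i = y i * q i"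
  proof -
    fix i assume i: "i < n" "i \<noteq> k"
    have e1: "y' i = y i * y k powr real_of_int (c i) * Lk powr real_of_int (- B k i)"
      using i unfolding y'd mut_y_def c_def Lk_def by simp
    have e2: "q' i = q i * y k powr real_of_int (- c i) * Lk powr real_of_int (B k i)"
      using i unfolding q'd mut_q_def c_def Lk_def by simp
    have h1: "y k powr real_of_int (c i) * y k powr real_of_int (- c i) = 1"
      using yk by (simp add: powr_add[symmetric])
    have h2: "Lk powr real_of_int (- B k i) * Lk powr real_of_int (B k i) = 1"
      using Lk by (simp add: powr_add[symmetric])
    have "y' i * q' i = (y i * q i) * (y k powr real_of_int (c i) * y k powr real_of_int (- c i))
       * (Lk powr real_of_int (- B k i) * Lk powr real_of_int (B k i))"
      unfolding e1 e2 by (simp only: mult.assoc mult.left_commute mult.commute)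
    then show "y' i * q' i = y i * q i" using h1 h2 by simp
  qed
  have q'k: "q' k = - q k * (y k)\<^sup>2 + T + y k / real (r k) * ln (Lb / Lk)"
    unfolding q'd mut_q_def T_def Lk_def Lb_def Y_def c_def by simp
  have y'k: "y' k = inverse (y k)" unfolding y'd mut_y_def by simp
  have yqk: "y' k * q' k = - q k * y k + T / y k + ln (Lb / Lk) / real (r k)"
    unfolding q'k y'k using yk by (simp add: field_simps power2_eq_square)
  have Sk: "S j = real (r k) * B k j * y k * q k
      + (\<Sum>i\<in>{..<n}-{k}. real (r i) * real_of_int (B i j) * y i * q i)"
    unfolding S_def by (rule sum.remove) (use k in auto)
  have rpp: "\<And>i. i < n \<Longrightarrow> real (r i) * real_of_int (pos_part (- \<epsilon> * B i k * int (d k)))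
      = real (r k) * real_of_int (c i)"
  proof -
    fix i assume i: "i < n"
    have "int (r i) * pos_part (- \<epsilon> * B i k * int (d k)) = pos_part (int (r i) * (- \<epsilon> * B i k * int (d k)))"
      by (simp add: pp_scale)
    also have "int (r i) * (- \<epsilon> * B i k * int (d k)) = (- \<epsilon> * int (d k)) * (int (r i) * B i k)"
      by (simp add: algebra_simps)
    also have "\<dots> = (- \<epsilon> * int (d k)) * (- (int (r k) * B k i))"
      using skew[OF i k] by simp
    also have "\<dots> = int (r k) * (\<epsilon> * int (d k) * B k i)"
      by (simp add: algebra_simps)
    also have "pos_part \<dots> = int (r k) * c i" unfolding c_def by (simp add: pp_scale)
    finally have "int (r i) * pos_part (- \<epsilon> * B i k * int (d k)) = int (r k) * c i" .
    then have "real_of_int (int (r i) * pos_part (- \<epsilon> * B i k * int (d k))) = real_of_int (int (r k) * c i)"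
      by simp
    then show "real (r i) * real_of_int (pos_part (- \<epsilon> * B i k * int (d k))) = real (r k) * real_of_int (c i)"
      by simp
  qed
  define A where "A = {..<n} - {k}"
  have finA: "finite A" unfolding A_def by simp
  have G: "gaction n r B' y' q' j = y' j * exp (real (r k) * real_of_int (B' k j) * (y' k * q' k)
      + (\<Sum>i\<in>A. real (r i) * real_of_int (B' i j) * (y i * q i)))"
  proof -
    have "(\<Sum>i<n. real (r i) * real_of_int (B' i j) * y' i * q' i)
        = real (r k) * real_of_int (B' k j) * y' k * q' k
          + (\<Sum>i\<in>A. real (r i) * real_of_int (B' i j) * y' i * q' i)"
      unfolding A_def by (rule sum.remove) (use k in auto)
    also have "(\<Sum>i\<in>A. real (r i) * real_of_int (B' i j) * y' i * q' i)
        = (\<Sum>i\<in>A. real (r i) * real_of_int (B' i j) * (y i * q i))"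
      by (rule sum.cong) (auto simp: A_def yq[symmetric] mult.assoc)
    finally show ?thesis unfolding gaction_def by (simp add: mult.assoc)
  qed
  have SkA: "S k = (\<Sum>i\<in>A. real (r i) * real_of_int (B i k) * (y i * q i))"
  proof -
    have "S k = real (r k) * B k k * y k * q k
      + (\<Sum>i\<in>A. real (r i) * real_of_int (B i k) * y i * q i)"
      unfolding S_def A_def by (rule sum.remove) (use k in auto)
    then show ?thesis using Bkk by (simp add: mult.assoc)
  qed
  show "gaction n r B' y' q' j = mut_y d B z k \<epsilon> Y j"
  proof (cases "j = k")
    case True
    have "(\<Sum>i\<in>A. real (r i) * real_of_int (B' i j) * (y i * q i))
        = - (\<Sum>i\<in>A. real (r i) * real_of_int (B i k) * (y i * q i))"
      unfolding B'd mut_B_def True by (simp add: sum_negf[symmetric])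
    then have "gaction n r B' y' q' j = inverse (y k) * exp (- S k)"
      unfolding G SkA using True by (simp add: B'd mut_B_def y'd mut_y_def Bkk)
    then show ?thesis using True by (simp add: mut_y_def Yd exp_minus)
  next
    case False
    have c0: "c k = 0" unfolding c_def using Bkk by (simp add: pos_part_def)
    have TA: "(\<Sum>i\<in>A. real_of_int (c i) * (y i * q i)) = T / y k"
    proof -
      have "(\<Sum>i'<n. real_of_int (c i') * q i' * y i') = real_of_int (c k) * q k * y k
          + (\<Sum>i\<in>A. real_of_int (c i) * q i * y i)"
        unfolding A_def by (rule sum.remove) (use k in auto)
      then show ?thesis using T0 c0 by (simp add: ac_simps)
    qed
    have E1: "(\<Sum>i\<in>A. real (r i) * real_of_int (B' i j) * (y i * q i))
       = (\<Sum>i\<in>A. real (r i) * real_of_int (B i j) * (y i * q i))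
         + real_of_int (B k j) * real (r k) * (\<Sum>i\<in>A. real_of_int (c i) * (y i * q i))
         + real_of_int (c j) * (\<Sum>i\<in>A. real (r i) * real_of_int (B i k) * (y i * q i))"
    proof -
      have "(\<Sum>i\<in>A. real (r i) * real_of_int (B' i j) * (y i * q i))
        = (\<Sum>i\<in>A. real (r i) * real_of_int (B i j) * (y i * q i)
           + real_of_int (B k j) * (real (r k) * (real_of_int (c i) * (y i * q i)))
           + real_of_int (c j) * (real (r i) * real_of_int (B i k) * (y i * q i)))"
      proof (rule sum.cong[OF refl])
        fix i assume i: "i \<in> A"
        then have "i < n" "i \<noteq> k" unfolding A_def by auto
        then have "real (r i) * real_of_int (B' i j) = real (r i) * real_of_int (B i j)
           + real_of_int (B k j) * (real (r i) * real_of_int (pos_part (- \<epsilon> * B i k * int (d k))))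
           + real_of_int (c j) * (real (r i) * real_of_int (B i k))"
          using False unfolding B'd mut_B_def c_def by (simp add: algebra_simps)
        then show "real (r i) * real_of_int (B' i j) * (y i * q i) =
           real (r i) * real_of_int (B i j) * (y i * q i)
           + real_of_int (B k j) * (real (r k) * (real_of_int (c i) * (y i * q i)))
           + real_of_int (c j) * (real (r i) * real_of_int (B i k) * (y i * q i))"
          using rpp[OF \<open>i < n\<close>] by (simp add: algebra_simps)
      qed
      then show ?thesis by (simp add: sum.distrib sum_distrib_left mult.assoc)
    qed
    have Bkj: "B' k j = - B k j" unfolding B'd mut_B_def by simp
    have Ex: "real (r k) * real_of_int (B' k j) * (y' k * q' k)
        + (\<Sum>i\<in>A. real (r i) * real_of_int (B' i j) * (y i * q i))
        = S j + real_of_int (c j) * S k - real_of_int (B k j) * (ln Lb - ln Lk)"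
      unfolding E1 yqk Bkj TA SkA[symmetric] using Sk rpos[OF k] Lb Lk
      by (simp add: ln_div A_def field_simps)
    have y'j: "y' j = y j * y k powr real_of_int (c j) * Lk powr real_of_int (- B k j)"
      using False unfolding y'd mut_y_def c_def Lk_def by simp
    have R: "mut_y d B z k \<epsilon> Y j = Y j * Y k powr real_of_int (c j) * Lb powr real_of_int (- B k j)"
      using False unfolding mut_y_def c_def Lb_def by simp
    have yj: "0 < y j" using ypos j by simp
    show ?thesis
      unfolding G Ex y'j R Yd using yj yk Lk Lb
      by (simp add: powr_def exp_add[symmetric] ln_mult algebra_simps)
  qed
qed

end
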